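(* Let $A=op\langle\{F_1=w_1,\dots,F_n=w_n\}\rangle\prec N$ be an aggregate and let $G$ be the formula $$\bigwedge_{I\subseteq\{1,\dots,n\}\,:\,op(\{w_i:i\in I\})\not\prec N}\Big(\big(\bigwedge_{i\in I}F_i\big)\to\big(\bigvee_{i\in\overline I}F_i\big)\Big),\qquad \overline I=\{1,\dots,n\}\setminus I.$$ If $A$ is monotone, then $G$ is strongly equivalent to $\bigwedge_{I\subseteq\{1,\dots,n\}:op(\{w_i:i\in I\})\not\prec N}\big(\bigvee_{i\in\overline I}F_i\big)$. If $A$ is antimonotone, then $G$ is strongly equivalent to $\bigwedge_{I\subseteq\{1,\dots,n\}:op(\{w_i:i\in I\})\not\prec N}\big(\neg\bigwedge_{i\in I}F_i\big)$.
   Context: Formulas with aggregates: atoms and $\bot$; combinations by $\wedge,\vee,\to$; and aggregates $op\langle\{F_1=w_1,\dots,F_n=w_n\}\rangle\prec N$ with $op$ a function from finite multisets of reals to $\mathbb R\cup\{\pm\infty\}$, $F_i$ formulas with aggregates, $w_i,N$ reals, $\prec$ a binary relation on reals ($\not\prec$ its negation). $\top:=\bot\to\bot$, $\neg F:=F\to\bot$; empty conjunction is $\top$, empty disjunction is $\bot$. $X$ satisfies the aggregate iff $op(W_X)\prec N$, $W_X$ the multiset of $w_i$ with $X\models F_i$. Reduct: $\bot^X=\bot$; $a^X=a$ if $a\in X$, else $\bot$; $(F\otimes G)^X=F^X\otimes G^X$ if $X\models F\otimes G$, else $\bot$; for an aggregate $A$, $A^X$ is $op\langle\{F_1^X=w_1,\dots,F_n^X=w_n\}\rangle\prec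 N$ if $X\models A$ and $\bot$ otherwise. $X$ is a stable model of a theory $\Gamma$ if $X\models\Gamma^X$ and no proper subset of $X$ satisfies $\Gamma^X$; two formulas are strongly equivalent if adding either of them to any theory yields the same stable models. The aggregate is monotone if for all sub-multisets $W_1\subseteq W_2\subseteq\{w_1,\dots,w_n\}$, $op(W_1)\prec N$ implies $op(W_2)\prec N$; antimonotone if for all $W_2\subseteq W_1\subseteq\{w_1,\dots,w_n\}$, $op(W_1)\prec N$ implies $op(W_2)\prec N$. *)

theory Defs
  imports Complex_Main "HOL-Library.Multiset" "HOL-Library.Extended_Real"
begin

text \<open>An aggregate  op<{F_1=w_1,...,F_n=w_n}> rel N  is  Agg op [(F_1,w_1),...,(F_n,w_n)] rel N.
  op maps finite multisets of reals to extended reals; the relation rel is taken on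
  extended reals (so that op(W) = +-infinity can be compared with the real N).\<close>
datatype 'a fml =
    Atom 'a
  | Bot
  | And "'a fml" "'a fml"
  | Or "'a fml" "'a fml"
  | Imp "'a fml" "'a fml"
  | Agg "real multiset \<Rightarrow> ereal" "('a fml \<times> real) list" "ereal \<Rightarrow> ereal \<Rightarrow> bool" real

definition Top :: "'a fml" where "Top = Imp Bot Bot"
definition Neg :: "'a fml \<Rightarrow> 'a fml" where "Neg F = Imp F Bot"

fun Conj :: "'a fml list \<Rightarrow> 'a fml" where
  "Conj [] = Top"
| "Conj [F] = F"
| "Conj (F # Fs) = And F (Conj Fs)"

fun Disj :: "'a fml list \<Rightarrow> 'a fml" where
  "Disj [] = Bot"
| "Disj [F] = F"
| "Disj (F # Fs) = Or F (Disj Fs)"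

fun sat :: "'a set \<Rightarrow> 'a fml \<Rightarrow> bool" where
  "sat X (Atom a) = (a \<in> X)"
| "sat X Bot = False"
| "sat X (And F G) = (sat X F \<and> sat X G)"
| "sat X (Or F G) = (sat X F \<or> sat X G)"
| "sat X (Imp F G) = (sat X F \<longrightarrow> sat X G)"
| "sat X (Agg op ps rel N) =
     rel (op (mset [snd p. p \<leftarrow> ps, sat X (fst p)])) (ereal N)"

fun reduct :: "'a set \<Rightarrow> 'a fml \<Rightarrow> 'a fml" where
  "reduct X (Atom a) = (if a \<in> X then Atom a else Bot)"
| "reduct X Bot = Bot"
| "reduct X (And F G) = (if sat X (And F G) then And (reduct X F) (reduct X G) else Bot)"
| "reduct X (Or F G) = (if sat X (Or F G) then Or (reduct X F) (reduct X G) else Bot)"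
| "reduct X (Imp F G) = (if sat X (Imp F G) then Imp (reduct X F) (reduct X G) else Bot)"
| "reduct X (Agg op ps rel N) =
     (if sat X (Agg op ps rel N)
      then Agg op [(reduct X (fst p), snd p). p \<leftarrow> ps] rel N else Bot)"

definition sat_theory :: "'a set \<Rightarrow> 'a fml set \<Rightarrow> bool" where
  "sat_theory X \<Gamma> = (\<forall>F\<in>\<Gamma>. sat X F)"

definition reduct_theory :: "'a set \<Rightarrow> 'a fml set \<Rightarrow> 'a fml set" where
  "reduct_theory X \<Gamma> = reduct X ` \<Gamma>"

definition stable_model :: "'a set \<Rightarrow> 'a fml set \<Rightarrow> bool" where
  "stable_model X \<Gamma> = (sat_theory X (reduct_theory X \<Gamma>) \<and>
     (\<forall>Y. Y \<subset> X \<longrightarrow> \<not> sat_theory Y (reduct_theory X \<Gamma>)))"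

definition strongly_equivalent :: "'a fml \<Rightarrow> 'a fml \<Rightarrow> bool" where
  "strongly_equivalent F G = (\<forall>\<Gamma>. \<forall>X. stable_model X (insert F \<Gamma>) = stable_model X (insert G \<Gamma>))"

definition agg_monotone :: "(real multiset \<Rightarrow> ereal) \<Rightarrow> ('a fml \<times> real) list \<Rightarrow> (ereal \<Rightarrow> ereal \<Rightarrow> bool) \<Rightarrow> real \<Rightarrow> bool" where
  "agg_monotone op ps rel N = (\<forall>W1 W2. W1 \<subseteq># W2 \<longrightarrow> W2 \<subseteq># mset (map snd ps) \<longrightarrow>
      rel (op W1) (ereal N) \<longrightarrow> rel (op W2) (ereal N))"

definition agg_antimonotone :: "(real multiset \<Rightarrow> ereal) \<Rightarrow> ('a fml \<times> real) list \<Rightarrow> (ereal \<Rightarrow> ereal \<Rightarrow> bool) \<Rightarrow> real \<Rightarrow> bool" where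
  "agg_antimonotone op ps rel N = (\<forall>W1 W2. W2 \<subseteq># W1 \<longrightarrow> W1 \<subseteq># mset (map snd ps) \<longrightarrow>
      rel (op W1) (ereal N) \<longrightarrow> rel (op W2) (ereal N))"

text \<open>Index sets I \<subseteq> {1..n} are represented as sublists of [0..<n] (positions in ps).
  bad_sets: those I with op({w_i : i in I}) not-rel N.\<close>
definition bad_sets :: "(real multiset \<Rightarrow> ereal) \<Rightarrow> ('a fml \<times> real) list \<Rightarrow> (ereal \<Rightarrow> ereal \<Rightarrow> bool) \<Rightarrow> real \<Rightarrow> nat list list" where
  "bad_sets op ps rel N =
     [I. I \<leftarrow> subseqs [0..<length ps], \<not> rel (op (mset (map (\<lambda>i. snd (ps ! i)) I))) (ereal N)]"

definition conj_in :: "('a fml \<times> real) list \<Rightarrow> nat list \<Rightarrow> 'a fml" where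
  "conj_in ps I = Conj (map (\<lambda>i. fst (ps ! i)) I)"

definition disj_out :: "('a fml \<times> real) list \<Rightarrow> nat list \<Rightarrow> 'a fml" where
  "disj_out ps I = Disj (map (\<lambda>i. fst (ps ! i)) (filter (\<lambda>i. i \<notin> set I) [0..<length ps]))"

definition G_formula :: "(real multiset \<Rightarrow> ereal) \<Rightarrow> ('a fml \<times> real) list \<Rightarrow> (ereal \<Rightarrow> ereal \<Rightarrow> bool) \<Rightarrow> real \<Rightarrow> 'a fml" where
  "G_formula op ps rel N = Conj [Imp (conj_in ps I) (disj_out ps I). I \<leftarrow> bad_sets op ps rel N]"

definition G_mono :: "(real multiset \<Rightarrow> ereal) \<Rightarrow> ('a fml \<times> real) list \<Rightarrow> (ereal \<Rightarrow> ereal \<Rightarrow> bool) \<Rightarrow> real \<Rightarrow> 'a fml" where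
  "G_mono op ps rel N = Conj [disj_out ps I. I \<leftarrow> bad_sets op ps rel N]"

definition G_anti :: "(real multiset \<Rightarrow> ereal) \<Rightarrow> ('a fml \<times> real) list \<Rightarrow> (ereal \<Rightarrow> ereal \<Rightarrow> bool) \<Rightarrow> real \<Rightarrow> 'a fml" where
  "G_anti op ps rel N = Conj [Neg (conj_in ps I). I \<leftarrow> bad_sets op ps rel N]"

end

theory Submission
  imports Defs
begin

lemma hr_sat: "sat Y (reduct X F) \<Longrightarrow> sat X F"
  by (cases F) (auto split: if_splits)

lemma hr_And: "sat Y (reduct X (And F G)) = (sat Y (reduct X F) \<and> sat Y (reduct X G))"
  using hr_sat[of Y X F] hr_sat[of Y X G] by auto

lemma hr_Or: "sat Y (reduct X (Or F G)) = (sat Y (reduct X F) \<or> sat Y (reduct X G))"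
  using hr_sat[of Y X F] hr_sat[of Y X G] by auto

lemma hr_Imp: "sat Y (reduct X (Imp F G)) = (sat X (Imp F G) \<and> (sat Y (reduct X F) \<longrightarrow> sat Y (reduct X G)))"
  by auto

lemma hr_Conj: "sat Y (reduct X (Conj Fs)) = (\<forall>F\<in>set Fs. sat Y (reduct X F))"
  by (induction Fs rule: Conj.induct) (auto simp: Top_def hr_And simp del: reduct.simps(3))

lemma sat_Conj: "sat X (Conj Fs) = (\<forall>F\<in>set Fs. sat X F)"
  by (induction Fs rule: Conj.induct) (auto simp: Top_def)

lemma hr_Disj: "sat Y (reduct X (Disj Fs)) = (\<exists>F\<in>set Fs. sat Y (reduct X F))"
  by (induction Fs rule: Disj.induct) (auto simp: hr_Or simp del: reduct.simps(4))

lemma sat_Disj: "sat X (Disj Fs) = (\<exists>F\<in>set Fs. sat X F)"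
  by (induction Fs rule: Disj.induct) auto

lemma hr_conj_in: "sat Y (reduct X (conj_in ps I)) = (\<forall>i\<in>set I. sat Y (reduct X (fst (ps!i))))"
  by (simp add: conj_in_def hr_Conj)
lemma sat_conj_in: "sat X (conj_in ps I) = (\<forall>i\<in>set I. sat X (fst (ps!i)))"
  by (simp add: conj_in_def sat_Conj)
lemma hr_disj_out: "sat Y (reduct X (disj_out ps I)) = (\<exists>i\<in>{0..<length ps} - set I. sat Y (reduct X (fst (ps!i))))"
  by (auto simp add: disj_out_def hr_Disj)
lemma sat_disj_out: "sat X (disj_out ps I) = (\<exists>i\<in>{0..<length ps} - set I. sat X (fst (ps!i)))"
  by (auto simp add: disj_out_def sat_Disj)

definition badS :: "(real multiset \<Rightarrow> ereal) \<Rightarrow> ('a fml \<times> real) list \<Rightarrow> (ereal \<Rightarrow> ereal \<Rightarrow> bool) \<Rightarrow> real \<Rightarrow> nat set \<Rightarrow> bool" where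
  "badS op ps rel N S = (\<not> rel (op (image_mset (\<lambda>i. snd (ps ! i)) (mset_set S))) (ereal N))"

lemma bad_sets_all:
  "(\<forall>I\<in>set (bad_sets op ps rel N). Q (set I)) = (\<forall>S\<subseteq>{0..<length ps}. badS op ps rel N S \<longrightarrow> Q S)"
proof -
  have m: "mset (map (\<lambda>i. snd (ps ! i)) I) = image_mset (\<lambda>i. snd (ps ! i)) (mset_set (set I))"
    if "I \<in> set (subseqs [0..<length ps])" for I
  proof -
    have "distinct I" using that subseqs_distinctD by fastforce
    thus ?thesis by (simp add: mset_set_set mset_map)
  qed
  have sub: "set I \<subseteq> {0..<length ps}" if "I \<in> set (subseqs [0..<length ps])" for I
    using subseqs_powset[of "[0..<length ps]"] that by auto
  show ?thesis
  proof
    assume H: "\<forall>I\<in>set (bad_sets op ps rel N). Q (set I)"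
    show "\<forall>S\<subseteq>{0..<length ps}. badS op ps rel N S \<longrightarrow> Q S"
    proof (intro allI impI)
      fix S assume S: "S \<subseteq> {0..<length ps}" "badS op ps rel N S"
      then obtain I where I: "I \<in> set (subseqs [0..<length ps])" "set I = S"
        using subset_subseqs[of S "[0..<length ps]"] by auto
      hence "I \<in> set (bad_sets op ps rel N)" using S m[OF I(1)]
        by (auto simp: bad_sets_def badS_def)
      thus "Q S" using H I by auto
    qed
  next
    assume H: "\<forall>S\<subseteq>{0..<length ps}. badS op ps rel N S \<longrightarrow> Q S"
    show "\<forall>I\<in>set (bad_sets op ps rel N). Q (set I)"
    proof
      fix I assume "I \<in> set (bad_sets op ps rel N)"
      hence I: "I \<in> set (subseqs [0..<length ps])" "badS op ps rel N (set I)"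
        using m by (auto simp: bad_sets_def badS_def)
      thus "Q (set I)" using H sub[OF I(1)] by auto
    qed
  qed
qed

lemma mono_core:
  assumes fin: "finite U"
    and C: "\<forall>S\<subseteq>U. B S \<longrightarrow> (\<forall>i\<in>S. P i) \<longrightarrow> (\<exists>i\<in>U-S. P i)"
    and M: "\<forall>S T. T\<subseteq>S \<longrightarrow> S\<subseteq>U \<longrightarrow> B S \<longrightarrow> B T"
    and S: "S \<subseteq> U" "B S"
  shows "\<exists>i\<in>U-S. P i"
proof -
  have "\<forall>T. card (S - T) = k \<longrightarrow> T \<subseteq> S \<longrightarrow> (\<forall>i\<in>T. P i) \<longrightarrow> (\<exists>i\<in>U-S. P i)" for k
  proof (induction k rule: less_induct)
    case (less k)
    show ?case
    proof (intro allI impI)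
      fix T assume T: "card (S - T) = k" "T \<subseteq> S" "\<forall>i\<in>T. P i"
      have "B T" using M S T by blast
      then obtain i where i: "i \<in> U - T" "P i" using C T S by blast
      show "\<exists>i\<in>U-S. P i"
      proof (cases "i \<in> S")
        case False thus ?thesis using i by auto
      next
        case True
        have fS: "finite S" using fin S finite_subset by blast
        have "S - insert i T \<subset> S - T" using True i by auto
        hence lt: "card (S - insert i T) < k" using T fS by (metis finite_Diff psubset_card_mono)
        have "insert i T \<subseteq> S" "\<forall>j\<in>insert i T. P j" using True T i by auto
        thus ?thesis using less.IH[OF lt, rule_format, of "insert i T"] by blast
      qed
    qed
  qed
  thus ?thesis by auto
qed

lemma anti_core:
  assumes fin: "finite U"
    and C: "\<forall>S\<subseteq>U. B S \<longrightarrow> (\<forall>i\<in>S. P i) \<longrightarrow> (\<exists>i\<in>U-S. P i)"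
    and M: "\<forall>S T. S\<subseteq>T \<longrightarrow> T\<subseteq>U \<longrightarrow> B S \<longrightarrow> B T"
    and S: "S \<subseteq> U" "B S"
  shows "\<not> (\<forall>i\<in>S. P i)"
proof -
  have "\<forall>T. card (U - T) = k \<longrightarrow> S \<subseteq> T \<longrightarrow> T \<subseteq> U \<longrightarrow> \<not>(\<forall>i\<in>T. P i)" for k
  proof (induction k rule: less_induct)
    case (less k)
    show ?case
    proof (intro allI impI notI)
      fix T assume T: "card (U - T) = k" "S \<subseteq> T" "T \<subseteq> U" "\<forall>i\<in>T. P i"
      have "B T" using M S T by blast
      then obtain i where i: "i \<in> U - T" "P i" using C T by blast
      have "U - insert i T \<subset> U - T" using i by auto
      hence lt: "card (U - insert i T) < k" using T fin by (metis finite_Diff psubset_card_mono)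
      have "S \<subseteq> insert i T" "insert i T \<subseteq> U" using T i by auto
      hence "\<not>(\<forall>j\<in>insert i T. P j)" using less.IH[OF lt, rule_format, of "insert i T"] by blast
      thus False using T i by auto
    qed
  qed
  thus ?thesis using S by auto
qed

lemma se_intro:
  assumes "\<And>X Y. sat Y (reduct X F) = sat Y (reduct X G)"
  shows "strongly_equivalent F G"
  using assms
  by (simp add: strongly_equivalent_def stable_model_def sat_theory_def reduct_theory_def)

lemma msub:
  assumes "T \<subseteq> S" "S \<subseteq> {0..<length ps}"
  shows "image_mset (\<lambda>i. snd (ps ! i)) (mset_set T) \<subseteq># image_mset (\<lambda>i. snd (ps ! i)) (mset_set S)"
    and "image_mset (\<lambda>i. snd (ps ! i)) (mset_set S) \<subseteq># mset (map snd ps)"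
proof -
  have fS: "finite S" using assms(2) finite_subset by blast
  have fT: "finite T" using assms(1) fS finite_subset by blast
  have "mset_set T \<subseteq># mset_set S" using assms(1) fS fT by (simp only: msubset_mset_set_iff)
  thus "image_mset (\<lambda>i. snd (ps ! i)) (mset_set T) \<subseteq># image_mset (\<lambda>i. snd (ps ! i)) (mset_set S)"
    by (rule image_mset_subseteq_mono)
  have e: "map snd ps = map (\<lambda>i. snd (ps ! i)) [0..<length ps]"
    by (rule nth_equalityI) auto
  have "mset_set S \<subseteq># mset_set {0..<length ps}" using assms(2) fS by (simp only: msubset_mset_set_iff finite_atLeastLessThan)
  hence "image_mset (\<lambda>i. snd (ps ! i)) (mset_set S) \<subseteq># image_mset (\<lambda>i. snd (ps ! i)) (mset_set {0..<length ps})"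
    by (rule image_mset_subseteq_mono)
  also have "\<dots> = mset (map snd ps)" unfolding e mset_map mset_upt ..
  finally show "image_mset (\<lambda>i. snd (ps ! i)) (mset_set S) \<subseteq># mset (map snd ps)" .
qed

lemma hG_lemma:
  "sat Y (reduct X (G_formula op ps rel N)) =
     ((\<forall>S\<subseteq>{0..<length ps}. badS op ps rel N S \<longrightarrow> (\<forall>i\<in>S. sat X (fst (ps!i))) \<longrightarrow> (\<exists>i\<in>{0..<length ps}-S. sat X (fst (ps!i)))) \<and>
      (\<forall>S\<subseteq>{0..<length ps}. badS op ps rel N S \<longrightarrow> (\<forall>i\<in>S. sat Y (reduct X (fst (ps!i)))) \<longrightarrow> (\<exists>i\<in>{0..<length ps}-S. sat Y (reduct X (fst (ps!i))))))" (is "_ = ?R")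
proof -
  have "sat Y (reduct X (G_formula op ps rel N)) =
    (\<forall>I\<in>set (bad_sets op ps rel N). ((\<forall>i\<in>set I. sat X (fst (ps!i))) \<longrightarrow> (\<exists>i\<in>{0..<length ps}-set I. sat X (fst (ps!i))))
       \<and> ((\<forall>i\<in>set I. sat Y (reduct X (fst (ps!i)))) \<longrightarrow> (\<exists>i\<in>{0..<length ps}-set I. sat Y (reduct X (fst (ps!i))))))"
    unfolding G_formula_def hr_Conj set_map ball_simps
    by (simp only: hr_Imp sat.simps sat_conj_in sat_disj_out hr_conj_in hr_disj_out)
  also have "\<dots> = ?R"
    unfolding ball_conj_distrib
    by (subst bad_sets_all[of op ps rel N], subst bad_sets_all[of op ps rel N], rule refl)
  finally show ?thesis by simp
qed

lemma hM_lemma: "sat Y (reduct X (G_mono op ps rel N)) =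
       (\<forall>S\<subseteq>{0..<length ps}. badS op ps rel N S \<longrightarrow> (\<exists>i\<in>{0..<length ps}-S. sat Y (reduct X (fst (ps!i)))))" (is "_ = ?R")
proof -
  have "sat Y (reduct X (G_mono op ps rel N)) = (\<forall>I\<in>set (bad_sets op ps rel N). (\<exists>i\<in>{0..<length ps}-set I. sat Y (reduct X (fst (ps!i)))))"
    unfolding G_mono_def hr_Conj set_map ball_simps by (simp only: hr_disj_out)
  also have "\<dots> = ?R" by (subst bad_sets_all[of op ps rel N], rule refl)
  finally show ?thesis by simp
qed

lemma hA_lemma: "sat Y (reduct X (G_anti op ps rel N)) =
       (\<forall>S\<subseteq>{0..<length ps}. badS op ps rel N S \<longrightarrow> \<not>(\<forall>i\<in>S. sat X (fst (ps!i))) \<and> \<not>(\<forall>i\<in>S. sat Y (reduct X (fst (ps!i)))))" (is "_ = ?R")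
proof -
  have "sat Y (reduct X (G_anti op ps rel N)) = (\<forall>I\<in>set (bad_sets op ps rel N). \<not>(\<forall>i\<in>set I. sat X (fst (ps!i))) \<and> \<not>(\<forall>i\<in>set I. sat Y (reduct X (fst (ps!i)))))"
    unfolding G_anti_def hr_Conj set_map ball_simps Neg_def
    by (auto simp add: hr_Imp sat_conj_in hr_conj_in dest: hr_sat)
  also have "\<dots> = ?R" by (subst bad_sets_all[of op ps rel N], rule refl)
  finally show ?thesis by simp
qed

theorem proposition13:
  fixes op :: "real multiset \<Rightarrow> ereal" and ps :: "('a fml \<times> real) list"
    and rel :: "ereal \<Rightarrow> ereal \<Rightarrow> bool" and N :: real
  shows "(agg_monotone op ps rel N \<longrightarrow>
            strongly_equivalent (G_formula op ps rel N) (G_mono op ps rel N))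
       \<and> (agg_antimonotone op ps rel N \<longrightarrow>
            strongly_equivalent (G_formula op ps rel N) (G_anti op ps rel N))"
proof (intro conjI impI)
  let ?U = "{0..<length ps}"
  let ?B = "badS op ps rel N"
  let ?W = "\<lambda>S. image_mset (\<lambda>i. snd (ps ! i)) (mset_set S)"
  have fin: "finite ?U" by simp
  {
    assume mono: "agg_monotone op ps rel N"
    have M: "\<forall>S T. T\<subseteq>S \<longrightarrow> S\<subseteq>?U \<longrightarrow> ?B S \<longrightarrow> ?B T"
    proof (intro allI impI)
      fix S T assume a: "T \<subseteq> S" "S \<subseteq> ?U" "?B S"
      have r: "rel (op (?W T)) (ereal N) \<Longrightarrow> rel (op (?W S)) (ereal N)"
        using mono[unfolded agg_monotone_def, rule_format, OF msub(1)[OF a(1,2)] msub(2)[OF a(1,2)]] .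
      show "?B T" using a(3) r unfolding badS_def by blast
    qed
    show "strongly_equivalent (G_formula op ps rel N) (G_mono op ps rel N)"
    proof (rule se_intro)
      fix X Y
      let ?P = "\<lambda>i. sat Y (reduct X (fst (ps!i)))"
      show "sat Y (reduct X (G_formula op ps rel N)) = sat Y (reduct X (G_mono op ps rel N))"
        unfolding hG_lemma hM_lemma
      proof (intro iffI conjI allI impI)
        fix S assume H: "(\<forall>S\<subseteq>?U. ?B S \<longrightarrow> (\<forall>i\<in>S. sat X (fst (ps!i))) \<longrightarrow> (\<exists>i\<in>?U-S. sat X (fst (ps!i)))) \<and>
          (\<forall>S\<subseteq>?U. ?B S \<longrightarrow> (\<forall>i\<in>S. ?P i) \<longrightarrow> (\<exists>i\<in>?U-S. ?P i))"
          and S: "S \<subseteq> ?U" "?B S"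
        show "\<exists>i\<in>?U-S. ?P i"
          by (rule mono_core[OF fin conjunct2[OF H] M S])
      next
        fix S assume H: "\<forall>S\<subseteq>?U. ?B S \<longrightarrow> (\<exists>i\<in>?U-S. ?P i)"
          and S: "S \<subseteq> ?U" "?B S" "\<forall>i\<in>S. sat X (fst (ps!i))"
        from H S obtain i where "i \<in> ?U-S" "?P i" by blast
        thus "\<exists>i\<in>?U-S. sat X (fst (ps!i))" using hr_sat by blast
      next
        fix S assume H: "\<forall>S\<subseteq>?U. ?B S \<longrightarrow> (\<exists>i\<in>?U-S. ?P i)"
          and S: "S \<subseteq> ?U" "?B S" "\<forall>i\<in>S. ?P i"
        show "\<exists>i\<in>?U-S. ?P i" using H S by blast
      qed
    qed
  }
  {
    assume anti: "agg_antimonotone op ps rel N"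
    have M: "\<forall>S T. S\<subseteq>T \<longrightarrow> T\<subseteq>?U \<longrightarrow> ?B S \<longrightarrow> ?B T"
    proof (intro allI impI)
      fix S T assume a: "S \<subseteq> T" "T \<subseteq> ?U" "?B S"
      have r: "rel (op (?W T)) (ereal N) \<Longrightarrow> rel (op (?W S)) (ereal N)"
        using anti[unfolded agg_antimonotone_def, rule_format, OF msub(1)[OF a(1,2)] msub(2)[OF a(1,2)]] .
      show "?B T" using a(3) r unfolding badS_def by blast
    qed
    show "strongly_equivalent (G_formula op ps rel N) (G_anti op ps rel N)"
    proof (rule se_intro)
      fix X Y
      let ?P = "\<lambda>i. sat Y (reduct X (fst (ps!i)))"
      let ?Q = "\<lambda>i. sat X (fst (ps!i))"
      show "sat Y (reduct X (G_formula op ps rel N)) = sat Y (reduct X (G_anti op ps rel N))"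
        unfolding hG_lemma hA_lemma
      proof (intro iffI conjI allI impI)
        fix S assume H: "(\<forall>S\<subseteq>?U. ?B S \<longrightarrow> (\<forall>i\<in>S. ?Q i) \<longrightarrow> (\<exists>i\<in>?U-S. ?Q i)) \<and>
          (\<forall>S\<subseteq>?U. ?B S \<longrightarrow> (\<forall>i\<in>S. ?P i) \<longrightarrow> (\<exists>i\<in>?U-S. ?P i))"
          and S: "S \<subseteq> ?U" "?B S"
        show "\<not>(\<forall>i\<in>S. ?Q i)"
          by (rule anti_core[OF fin conjunct1[OF H] M S])
        show "\<not>(\<forall>i\<in>S. ?P i)"
          by (rule anti_core[OF fin conjunct2[OF H] M S])
      next
        fix S assume H: "\<forall>S\<subseteq>?U. ?B S \<longrightarrow> \<not>(\<forall>i\<in>S. ?Q i) \<and> \<not>(\<forall>i\<in>S. ?P i)"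
          and S: "S \<subseteq> ?U" "?B S" "\<forall>i\<in>S. ?Q i"
        show "\<exists>i\<in>?U-S. ?Q i" using H S by blast
      next
        fix S assume H: "\<forall>S\<subseteq>?U. ?B S \<longrightarrow> \<not>(\<forall>i\<in>S. ?Q i) \<and> \<not>(\<forall>i\<in>S. ?P i)"
          and S: "S \<subseteq> ?U" "?B S" "\<forall>i\<in>S. ?P i"
        show "\<exists>i\<in>?U-S. ?P i" using H S by blast
      qed
    qed
  }
qed

end
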